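(* Let $\mathcal{C}$ be an optimum distance flag code of type $(t_1,\ldots,t_r)$ on $\mathbb{F}_q^n$. Then for every $i\in\{1,\ldots,r\}$ the $i$-projected code $\mathcal{C}_i$ satisfies $d_S(\mathcal{C}_i)=\min\{2t_i,2(n-t_i)\}$.
   Context: $q$ is a prime power, $n>1$. For subspaces $\mathcal{U},\mathcal{V}$ of $\mathbb{F}_q^n$, $d_S(\mathcal{U},\mathcal{V})=\dim(\mathcal{U}+\mathcal{V})-\dim(\mathcal{U}\cap\mathcal{V})$; for a set $\mathcal{D}$ of subspaces, $d_S(\mathcal{D})$ is the minimum of $d_S$ over pairs of distinct elements (and $d_S(\mathcal{D})=0$ if $|\mathcal{D}|=1$). A flag of type $(t_1,\ldots,t_r)$, $0<t_1<\cdots<t_r<n$, is a tuple $(\mathcal{F}_1,\ldots,\mathcal{F}_r)$ of nested subspaces $\mathcal{F}_1\subsetneq\cdots\subsetneq\mathcal{F}_r$ of $\mathbb{F}_q^n$ with $\dim\mathcal{F}_i=t_i$. A flag code of that type is a set of at least two such flags; its distance $d_f(\mathcal{C})$ is the minimum over distinct $\mathcal{F},\mathcal{F}'\in\mathcal{C}$ of $\sum_{i=1}^r d_S(\mathcal{F}_i,\mathcal{F}'_i)$. The code is an optimum distance flag code if $d_f(\mathcal{C})= 2\left(\sum_{t_i \leq \lfloor n/2\rfloor} t_i + \sum_{t_i > \lfloor n/2\rfloor} (n-t_i)\right)$. The $i$-projected code is $\mathcal{C}_i=\{\mathcal{F}_i : (\mathcal{F}_1,\ldots,\mathcal{F}_r)\in\mathcal{C}\}$.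 *)

theory Defs
  imports "HOL-Analysis.Analysis"
begin

text \<open>Vectors of F_q^n are modelled as 'a ^ 'n with 'a a finite field and
CARD('n) = n; subspaces, span and dimension are those of the library
vector space interpretation vec (scalar multiplication (*s)).\<close>

definition subspace_dist :: "('a::field ^ 'n) set \<Rightarrow> ('a ^ 'n) set \<Rightarrow> nat" where
  "subspace_dist U V = vec.dim (vec.span (U \<union> V)) - vec.dim (U \<inter> V)"

definition set_subspace_dist :: "('a::field ^ 'n) set set \<Rightarrow> nat" where
  "set_subspace_dist D =
     (if \<exists>U\<in>D. \<exists>V\<in>D. U \<noteq> V
      then Min {subspace_dist U V | U V. U \<in> D \<and> V \<in> D \<and> U \<noteq> V}
      else 0)"

definition flag_type :: "nat \<Rightarrow> nat list \<Rightarrow> bool" where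
  "flag_type n ts \<longleftrightarrow> ts \<noteq> [] \<and> sorted_wrt (<) ts \<and> (\<forall>i<length ts. 0 < ts ! i \<and> ts ! i < n)"

definition is_flag :: "nat list \<Rightarrow> ('a::field ^ 'n) set list \<Rightarrow> bool" where
  "is_flag ts F \<longleftrightarrow> length F = length ts
     \<and> (\<forall>i<length ts. vec.subspace (F ! i) \<and> vec.dim (F ! i) = ts ! i)
     \<and> (\<forall>i. Suc i < length ts \<longrightarrow> F ! i \<subset> F ! Suc i)"

definition flag_code :: "nat list \<Rightarrow> ('a::field ^ 'n) set list set \<Rightarrow> bool" where
  "flag_code ts C \<longleftrightarrow> flag_type CARD('n) ts \<and> (\<forall>F\<in>C. is_flag ts F)
     \<and> (\<exists>F\<in>C. \<exists>G\<in>C. F \<noteq> G)"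

definition flag_dist :: "nat list \<Rightarrow> ('a::field ^ 'n) set list \<Rightarrow> ('a ^ 'n) set list \<Rightarrow> nat" where
  "flag_dist ts F G = (\<Sum>i<length ts. subspace_dist (F ! i) (G ! i))"

definition code_dist :: "nat list \<Rightarrow> ('a::field ^ 'n) set list set \<Rightarrow> nat" where
  "code_dist ts C = Min {flag_dist ts F G | F G. F \<in> C \<and> G \<in> C \<and> F \<noteq> G}"

definition optimum_distance_flag_code :: "nat list \<Rightarrow> ('a::field ^ 'n) set list set \<Rightarrow> bool" where
  "optimum_distance_flag_code ts C \<longleftrightarrow> flag_code ts C \<and>
     code_dist ts C = 2 * (\<Sum>i<length ts.
        if ts ! i \<le> CARD('n) div 2 then ts ! i else CARD('n) - ts ! i)"

definition projected_code :: "('a ^ 'n) set list set \<Rightarrow> nat \<Rightarrow> ('a ^ 'n) set set" where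
  "projected_code C i = (\<lambda>F. F ! i) ` C"

end

theory Submission
  imports Defs
begin

lemma sd_self:
  fixes U :: "('a::field ^ 'n) set"
  assumes "vec.subspace U"
  shows "subspace_dist U U = 0"
proof -
  have sU: "vec.span U = U" using assms by (rule vec.span_eq_iff[THEN iffD2])
  show ?thesis unfolding subspace_dist_def Un_absorb Int_absorb sU by simp
qed

lemma sd_bound:
  fixes U V :: "('a::field ^ 'n) set"
  assumes "vec.subspace U" "vec.subspace V" "vec.dim U = t" "vec.dim V = t"
  shows "subspace_dist U V \<le> 2 * min t (CARD('n) - t)"
proof -
  have g: "vec.dim (vec.span (U \<union> V)) + vec.dim (U \<inter> V) = 2 * t"
  proof -
    have sU: "vec.span U = U" and sV: "vec.span V = V" using assms(1,2) by (simp_all add: vec.span_eq_iff)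
    have "vec.span (U \<union> V) = {x + y |x y. x \<in> U \<and> y \<in> V}"
      using vec.span_Un[of U V] unfolding sU sV .
    then show ?thesis using vec.dim_sums_Int[OF assms(1,2)] assms(3,4) by simp
  qed
  have n: "vec.dim (vec.span (U \<union> V)) \<le> CARD('n)"
    using vec.dim_subset_UNIV[of "vec.span (U \<union> V)"]
    by (simp add: vec.dimension_def card_cart_basis)
  show ?thesis unfolding subspace_dist_def using g n by linarith
qed

theorem proposition3p7:
  fixes C :: "('a::{finite,field} ^ 'n) set list set" and ts :: "nat list"
  assumes "CARD('n) > 1"
    and "optimum_distance_flag_code ts C"
    and "i < length ts"
  shows "set_subspace_dist (projected_code C i) = min (2 * ts ! i) (2 * (CARD('n) - ts ! i))"
proof -
  define n where "n = CARD('n)"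
  define m where "m = (\<lambda>j. if ts ! j \<le> n div 2 then ts ! j else n - ts ! j)"
  have fc: "flag_code ts C" and cd: "code_dist ts C = 2 * (\<Sum>j<length ts. m j)"
    using assms(2) unfolding optimum_distance_flag_code_def m_def n_def by auto
  have ft: "flag_type n ts" and flags: "\<And>F. F \<in> C \<Longrightarrow> is_flag ts F"
    and two: "\<exists>F\<in>C. \<exists>G\<in>C. F \<noteq> G"
    using fc unfolding flag_code_def n_def by auto
  have tsb: "\<And>j. j < length ts \<Longrightarrow> 0 < ts ! j \<and> ts ! j < n"
    using ft unfolding flag_type_def by auto
  have mmin: "\<And>j. j < length ts \<Longrightarrow> m j = min (ts ! j) (n - ts ! j) \<and> 0 < m j"
  proof -
    fix j assume "j < length ts"
    then have "0 < ts ! j \<and> ts ! j < n" by (rule tsb)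
    then show "m j = min (ts ! j) (n - ts ! j) \<and> 0 < m j"
      unfolding m_def by auto
  qed
  have finC: "finite C"
  proof -
    have "C \<subseteq> {F. set F \<subseteq> UNIV \<and> length F = length ts}"
      using flags unfolding is_flag_def by auto
    moreover have "finite {F :: ('a ^ 'n) set list. set F \<subseteq> UNIV \<and> length F = length ts}"
      by (rule finite_lists_length_eq) simp
    ultimately show ?thesis by (rule finite_subset)
  qed
  have key: "\<And>F G j. F \<in> C \<Longrightarrow> G \<in> C \<Longrightarrow> F \<noteq> G \<Longrightarrow> j < length ts \<Longrightarrow>
      subspace_dist (F ! j) (G ! j) = 2 * m j"
  proof -
    fix F G j assume FC: "F \<in> C" and GC: "G \<in> C" and ne: "F \<noteq> G" and j: "j < length ts"
    let ?S = "{flag_dist ts F G | F G. F \<in> C \<and> G \<in> C \<and> F \<noteq> G}"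
    have "finite ?S"
    proof -
      have "?S = (\<lambda>(F, G). flag_dist ts F G) ` {(F, G). F \<in> C \<and> G \<in> C \<and> F \<noteq> G}"
        by auto
      moreover have "finite {(F, G). F \<in> C \<and> G \<in> C \<and> F \<noteq> G}"
        by (rule finite_subset[of _ "C \<times> C"]) (use finC in auto)
      ultimately show ?thesis by simp
    qed
    then have "code_dist ts C \<le> flag_dist ts F G"
      unfolding code_dist_def using FC GC ne by (intro Min_le) auto
    then have ge: "2 * (\<Sum>j<length ts. m j) \<le> (\<Sum>k<length ts. subspace_dist (F ! k) (G ! k))"
      using cd unfolding flag_dist_def by simp
    have le: "\<And>k. k \<in> {..<length ts} \<Longrightarrow> subspace_dist (F ! k) (G ! k) \<le> 2 * m k"
    proof -
      fix k assume "k \<in> {..<length ts}"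
      then have k: "k < length ts" by simp
      have "vec.subspace (F ! k)" "vec.dim (F ! k) = ts ! k"
           "vec.subspace (G ! k)" "vec.dim (G ! k) = ts ! k"
        using flags[OF FC] flags[OF GC] k unfolding is_flag_def by auto
      then have "subspace_dist (F ! k) (G ! k) \<le> 2 * min (ts ! k) (CARD('n) - ts ! k)"
        by (intro sd_bound) auto
      then show "subspace_dist (F ! k) (G ! k) \<le> 2 * m k" using mmin[OF k] n_def by simp
    qed
    show "subspace_dist (F ! j) (G ! j) = 2 * m j"
    proof (rule ccontr)
      assume "subspace_dist (F ! j) (G ! j) \<noteq> 2 * m j"
      with le[of j] j have "subspace_dist (F ! j) (G ! j) < 2 * m j" by simp
      then have "(\<Sum>k<length ts. subspace_dist (F ! k) (G ! k)) < (\<Sum>k<length ts. 2 * m k)"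
        using j le by (intro sum_strict_mono_ex1) auto
      also have "\<dots> = 2 * (\<Sum>j<length ts. m j)" by (simp add: sum_distrib_left)
      finally show False using ge by simp
    qed
  qed
  let ?D = "projected_code C i"
  have neq: "\<And>F G. F \<in> C \<Longrightarrow> G \<in> C \<Longrightarrow> F \<noteq> G \<Longrightarrow> F ! i \<noteq> G ! i"
  proof
    fix F G assume FC: "F \<in> C" and GC: "G \<in> C" and ne: "F \<noteq> G" and eq: "F ! i = G ! i"
    have "vec.subspace (F ! i)" using flags[OF FC] assms(3) unfolding is_flag_def by auto
    then have "subspace_dist (F ! i) (G ! i) = 0" using eq sd_self by metis
    moreover have "subspace_dist (F ! i) (G ! i) = 2 * m i" using key FC GC ne assms(3) by blast
    ultimately show False using mmin[OF assms(3)] by simp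
  qed
  have ex: "\<exists>U\<in>?D. \<exists>V\<in>?D. U \<noteq> V"
  proof -
    obtain F G where FG: "F \<in> C" "G \<in> C" "F \<noteq> G" using two by blast
    have "F ! i \<in> ?D" "G ! i \<in> ?D" using FG(1,2) unfolding projected_code_def by auto
    moreover have "F ! i \<noteq> G ! i" using neq FG by blast
    ultimately show ?thesis by blast
  qed
  have set: "{subspace_dist U V | U V. U \<in> ?D \<and> V \<in> ?D \<and> U \<noteq> V} = {2 * m i}"
  proof
    show "{subspace_dist U V | U V. U \<in> ?D \<and> V \<in> ?D \<and> U \<noteq> V} \<subseteq> {2 * m i}"
    proof
      fix x assume "x \<in> {subspace_dist U V | U V. U \<in> ?D \<and> V \<in> ?D \<and> U \<noteq> V}"
      then obtain F G where "F \<in> C" "G \<in> C" "F ! i \<noteq> G ! i" "x = subspace_dist (F ! i) (G ! i)"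
        unfolding projected_code_def by auto
      then show "x \<in> {2 * m i}" using key assms(3) by fastforce
    qed
  next
    obtain U V where "U \<in> ?D" "V \<in> ?D" "U \<noteq> V" using ex by blast
    moreover then obtain F G where "F \<in> C" "G \<in> C" "U = F ! i" "V = G ! i"
      unfolding projected_code_def by auto
    ultimately have "subspace_dist U V = 2 * m i" using key assms(3) by fastforce
    then have "\<exists>U' V'. 2 * m i = subspace_dist U' V' \<and> U' \<in> ?D \<and> V' \<in> ?D \<and> U' \<noteq> V'"
      using \<open>U \<in> ?D\<close> \<open>V \<in> ?D\<close> \<open>U \<noteq> V\<close> by metis
    then show "{2 * m i} \<subseteq> {subspace_dist U V | U V. U \<in> ?D \<and> V \<in> ?D \<and> U \<noteq> V}"
      by simp
  qed
  show ?thesis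
    unfolding set_subspace_dist_def using ex set mmin[OF assms(3)] n_def by simp
qed

end
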